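(* For the iterates of ARDCA (context) and every $k\ge0$, $$u^{k+1}=\frac{\theta_k}{\theta_0}z^{k+1}+\theta_k\sum_{t=1}^k\left(\frac{\theta_t(1-\theta_0)^{k-t}}{\theta_{t-1}^2}-\frac{(1-\theta_0)^{k+1-t}}{\theta_{t-1}}\right)u^t,$$ where each coefficient $\frac{\theta_t(1-\theta_0)^{k-t}}{\theta_{t-1}^2}-\frac{(1-\theta_0)^{k+1-t}}{\theta_{t-1}}$ ($1\le t\le k$) is positive and $$\frac{\theta_k}{\theta_0}+\theta_k\sum_{t=1}^k\left(\frac{\theta_t(1-\theta_0)^{k-t}}{\theta_{t-1}^2}-\frac{(1-\theta_0)^{k+1-t}}{\theta_{t-1}}\right)=1.$$
   Context: $\widehat n\ge1$ is an integer; $\theta_0=1/\widehat n$, $\theta_{k+1}=\frac{\sqrt{\theta_k^4+4\theta_k^2}-\theta_k^2}{2}$ (so $\frac{1-\theta_k}{\theta_k^2}=\frac1{\theta_{k-1}^2}$, with convention $1/\theta_{-1}^2=\widehat n^2-\widehat n$). ARDCA generates vectors in $\mathbb{R}^{\widehat n}$ by: $z^0=u^0$; for $k\ge0$, $v^k=\theta_kz^k+(1-\theta_k)u^k$; $z^{k+1}$ differs from $z^k$ in at most one coordinate $i_k$ (chosen at random, with $z^{k+1}_{i_k}$ given by a coordinate proximal step on the dual objective); $u^{k+1}=v^k+\widehat n\theta_k(z^{k+1}-z^k)$. (The identity only uses the relations $z^0=u^0$, $v^k=\theta_kz^k+(1-\theta_k)u^k$, $u^{k+1}=v^k+\widehat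 n\theta_k(z^{k+1}-z^k)$ and the definition of $\theta_k$.) *)

theory Defs
  imports "HOL-Analysis.Analysis"
begin

fun ardca_theta :: "nat \<Rightarrow> nat \<Rightarrow> real" where
  "ardca_theta nh 0 = 1 / real nh"
| "ardca_theta nh (Suc k) =
     (sqrt ((ardca_theta nh k)^4 + 4 * (ardca_theta nh k)^2) - (ardca_theta nh k)^2) / 2"

end

theory Submission
  imports Defs
begin

lemma step_root:
  fixes a :: real
  assumes apos: "a > 0"
  shows "(sqrt (a^4 + 4*a^2) - a^2)/2 > 0 \<and> ((sqrt (a^4 + 4*a^2) - a^2)/2)^2 = (1 - (sqrt (a^4 + 4*a^2) - a^2)/2) * a^2"
proof -
  define s where "s = sqrt (a^4 + 4*a^2)"
  have s2: "s^2 = a^4 + 4*a^2" unfolding s_def by (simp add: add_nonneg_nonneg)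
  have s0: "s \<ge> 0" unfolding s_def by simp
  have "(a^2)^2 < s^2" using s2 apos by (simp add: power2_eq_square power4_eq_xxxx)
  hence "a^2 < s" using s0 by (meson abs_le_square_iff abs_of_nonneg less_le_not_le not_less power2_less_imp_less)
  moreover have "((s - a^2)/2)^2 = (1 - (s - a^2)/2) * a^2"
    using s2 by (simp add: power2_eq_square field_simps power4_eq_xxxx)
  ultimately show ?thesis unfolding s_def by simp
qed

lemma theta_facts:
  assumes n: "nh \<ge> 1"
  shows "ardca_theta nh k > 0 \<and> (ardca_theta nh (Suc k))^2 = (1 - ardca_theta nh (Suc k)) * (ardca_theta nh k)^2"
proof (induction k)
  case 0
  have p: "ardca_theta nh 0 > 0" using n by simp
  then show ?case using step_root[OF p] by simp
next
  case (Suc k)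
  have "ardca_theta nh (Suc k) > 0" using step_root[of "ardca_theta nh k"] Suc by simp
  then show ?case using step_root[of "ardca_theta nh (Suc k)"] by simp
qed

theorem lemma9:
  fixes z u v :: "nat \<Rightarrow> real ^ 'n"
  defines "nh \<equiv> CARD('n)"
  defines "\<theta> \<equiv> ardca_theta nh"
  assumes z0: "z 0 = u 0"
    and v_def: "\<And>k. v k = \<theta> k *\<^sub>R z k + (1 - \<theta> k) *\<^sub>R u k"
    and z_step: "\<And>k. \<exists>i. \<forall>j. j \<noteq> i \<longrightarrow> z (Suc k) $ j = z k $ j"
    and u_step: "\<And>k. u (Suc k) = v k + (real nh * \<theta> k) *\<^sub>R (z (Suc k) - z k)"
  shows "(\<forall>k. u (Suc k) =
            (\<theta> k / \<theta> 0) *\<^sub>R z (Suc k)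
            + \<theta> k *\<^sub>R (\<Sum>t = 1..k.
                 (\<theta> t * (1 - \<theta> 0)^(k - t) / (\<theta> (t - 1))^2
                  - (1 - \<theta> 0)^(k + 1 - t) / \<theta> (t - 1)) *\<^sub>R u t))
    \<and> (\<forall>k. nh \<ge> 2 \<longrightarrow> (\<forall>t \<in> {1..k}.
            \<theta> t * (1 - \<theta> 0)^(k - t) / (\<theta> (t - 1))^2
            - (1 - \<theta> 0)^(k + 1 - t) / \<theta> (t - 1) > 0))
    \<and> (\<forall>k. \<theta> k / \<theta> 0
            + \<theta> k * (\<Sum>t = 1..k.
                 \<theta> t * (1 - \<theta> 0)^(k - t) / (\<theta> (t - 1))^2
                 - (1 - \<theta> 0)^(k + 1 - t) / \<theta> (t - 1)) = 1)"
proof -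
  have n1: "nh \<ge> 1" unfolding nh_def using zero_less_card_finite[where ?'a='n] by linarith
  have pos: "\<And>k. \<theta> k > 0" using theta_facts[OF n1] unfolding \<theta>_def by blast
  have rec: "\<And>k. (\<theta> (Suc k))^2 = (1 - \<theta> (Suc k)) * (\<theta> k)^2" using theta_facts[OF n1] unfolding \<theta>_def by blast
  have t0: "\<theta> 0 = 1 / real nh" unfolding \<theta>_def by simp
  have nt0: "real nh * \<theta> 0 = 1" using n1 t0 by simp
  have q0: "\<And>k. \<theta> k / \<theta> 0 = real nh * \<theta> k" using t0 by simp
  define c where "c k t = \<theta> t * (1 - \<theta> 0)^(k - t) / (\<theta> (t - 1))^2
                 - (1 - \<theta> 0)^(k + 1 - t) / \<theta> (t - 1)" for k t
  have cS: "\<And>(k::nat) (t::nat). t \<in> {1..k} \<Longrightarrow> c (Suc k) t = (1 - \<theta> 0) * c k t"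
  proof -
    fix k t :: nat assume "t \<in> {1..k}"
    hence e1: "Suc k - t = Suc (k - t)" and e2: "Suc k + 1 - t = Suc (k + 1 - t)" by auto
    show "c (Suc k) t = (1 - \<theta> 0) * c k t" unfolding c_def e1 e2 by (simp add: algebra_simps)
  qed
  have cSS: "\<And>k::nat. c (Suc k) (Suc k) = \<theta> (Suc k) / (\<theta> k)^2 - (1 - \<theta> 0) / \<theta> k"
    unfolding c_def by simp
  have sumS: "\<And>(f :: nat \<Rightarrow> 'b::real_vector) (k::nat). (\<Sum>t = 1..Suc k. c (Suc k) t *\<^sub>R f t)
      = (1 - \<theta> 0) *\<^sub>R (\<Sum>t = 1..k. c k t *\<^sub>R f t) + c (Suc k) (Suc k) *\<^sub>R f (Suc k)"
  proof -
    fix f :: "nat \<Rightarrow> 'b::real_vector" and k :: nat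
    have "(\<Sum>t = 1..Suc k. c (Suc k) t *\<^sub>R f t) = (\<Sum>t = 1..k. c (Suc k) t *\<^sub>R f t) + c (Suc k) (Suc k) *\<^sub>R f (Suc k)"
      by (simp add: sum.cl_ivl_Suc)
    also have "(\<Sum>t = 1..k. c (Suc k) t *\<^sub>R f t) = (\<Sum>t = 1..k. (1 - \<theta> 0) *\<^sub>R (c k t *\<^sub>R f t))"
      by (rule sum.cong) (simp_all add: cS)
    also have "\<dots> = (1 - \<theta> 0) *\<^sub>R (\<Sum>t = 1..k. c k t *\<^sub>R f t)" by (simp add: scaleR_sum_right)
    finally show "(\<Sum>t = 1..Suc k. c (Suc k) t *\<^sub>R f t)
      = (1 - \<theta> 0) *\<^sub>R (\<Sum>t = 1..k. c k t *\<^sub>R f t) + c (Suc k) (Suc k) *\<^sub>R f (Suc k)" .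
  qed
  have P3: "real nh * \<theta> k + \<theta> k * (\<Sum>t = 1..k. c k t) = 1" for k
  proof (induction k)
    case 0
    then show ?case using nt0 by simp
  next
    case (Suc k)
    have S: "(\<Sum>t = 1..Suc k. c (Suc k) t) = (1 - \<theta> 0) * (\<Sum>t = 1..k. c k t) + c (Suc k) (Suc k)"
      using sumS[where f="\<lambda>_. 1::real" and k=k] by simp
    have Sk: "(\<Sum>t = 1..k. c k t) = (1 - real nh * \<theta> k) / \<theta> k" using Suc pos[of k]
      by (simp add: field_simps)
    have r: "(\<theta> (Suc k))^2 = (1 - \<theta> (Suc k)) * (\<theta> k)^2" by (rule rec)
    have nx: "\<And>x. real nh * (\<theta> 0 * x) = x" using nt0 by (metis mult.assoc mult_1)
    have r2: "\<theta> k * (\<theta> (Suc k) * \<theta> (Suc k) + \<theta> k * (\<theta> k * \<theta> (Suc k))) = \<theta> k * (\<theta> k * \<theta> k)"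
      using r by (simp add: power2_eq_square algebra_simps)
    show ?case unfolding S Sk cSS using pos[of k] pos[of "Suc k"] r2 t0 n1
      by (simp add: field_simps power2_eq_square nx)
  qed
  define S where "S k = (\<Sum>t = 1..k. c k t *\<^sub>R u t)" for k
  have P1: "u (Suc k) = (real nh * \<theta> k) *\<^sub>R z (Suc k) + \<theta> k *\<^sub>R S k" for k
  proof (induction k)
    case 0
    show ?case using u_step[of 0] v_def[of 0] z0 nt0 unfolding S_def
      by (simp add: algebra_simps)
  next
    case (Suc k)
    define a where "a = \<theta> k"
    define b where "b = \<theta> (Suc k)"
    define cc where "cc = c (Suc k) (Suc k)"
    define n where "n = real nh"
    define z1 where "z1 = z (Suc k)"
    define z2 where "z2 = z (Suc (Suc k))"
    define S0 where "S0 = S k"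
    have apos: "a > 0" and bpos: "b > 0" unfolding a_def b_def using pos by auto
    have r: "b^2 = (1 - b) * a^2" unfolding a_def b_def by (rule rec)
    have ccd: "cc = b / a^2 - (1 - \<theta> 0) / a" unfolding cc_def a_def b_def by (rule cSS)
    have th0: "\<theta> 0 = 1 / n" unfolding n_def by (rule t0)
    have IH: "u (Suc k) = (n * a) *\<^sub>R z1 + a *\<^sub>R S0" unfolding n_def a_def z1_def S0_def by (rule Suc)
    have SS: "S (Suc k) = (1 - \<theta> 0) *\<^sub>R S0 + cc *\<^sub>R u (Suc k)"
      unfolding S_def S0_def cc_def by (rule sumS)
    have L: "u (Suc (Suc k)) = (n * b) *\<^sub>R z2 + (b - n * b + (1 - b) * n * a) *\<^sub>R z1 + ((1 - b) * a) *\<^sub>R S0"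
      unfolding u_step[of "Suc k"] v_def[of "Suc k"] IH
      by (simp add: algebra_simps z1_def z2_def b_def n_def)
    have R: "(n * b) *\<^sub>R z2 + b *\<^sub>R S (Suc k) = (n * b) *\<^sub>R z2 + (b * cc * n * a) *\<^sub>R z1 + (b * (1 - \<theta> 0) + b * cc * a) *\<^sub>R S0"
      unfolding SS IH by (simp add: algebra_simps)
    have e1: "b - n * b + (1 - b) * n * a = b * cc * n * a"
    proof -
      have "(1 - b) * a = b^2 / a" using r apos by (simp add: field_simps power2_eq_square)
      hence "(1 - b) * n * a = n * b^2 / a" by (metis mult.commute mult.left_commute times_divide_eq_right)
      moreover have "b * cc * n * a = n * b^2 / a - n * b * (1 - \<theta> 0)" unfolding ccd using apos
        by (simp add: field_simps power2_eq_square)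
      moreover have "n * b * (1 - \<theta> 0) = n * b - b" unfolding th0 using n1 n_def by (simp add: field_simps)
      ultimately show ?thesis by simp
    qed
    have e2: "(1 - b) * a = b * (1 - \<theta> 0) + b * cc * a"
    proof -
      have "(1 - b) * a = b^2 / a" using r apos by (simp add: field_simps power2_eq_square)
      moreover have "b * cc * a = b^2 / a - b * (1 - \<theta> 0)" unfolding ccd using apos
        by (simp add: field_simps power2_eq_square)
      ultimately show ?thesis by simp
    qed
    show ?case unfolding L R[unfolded n_def b_def z2_def, folded n_def b_def z2_def, symmetric] e1 e2
      unfolding n_def b_def z2_def by simp
  qed
  have P2: "c k t > 0" if n2: "nh \<ge> 2" and t: "t \<in> {1..k}" for k t
  proof -
    obtain s where s: "t = Suc s" using t by (cases t) auto
    have dec: "\<theta> (Suc j) \<le> \<theta> j" for j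
    proof -
      have "1 - \<theta> (Suc j) \<ge> 0"
      proof (rule ccontr)
        assume "\<not> 1 - \<theta> (Suc j) \<ge> 0"
        hence "(1 - \<theta> (Suc j)) * (\<theta> j)^2 < 0" using pos[of j] by (simp add: mult_neg_pos)
        thus False using rec[of j] by (metis not_less zero_le_power2)
      qed
      hence "(1 - \<theta> (Suc j)) * (\<theta> j)^2 \<le> (\<theta> j)^2" using pos[of "Suc j"]
        by (intro mult_left_le_one_le) auto
      hence "(\<theta> (Suc j))^2 \<le> (\<theta> j)^2" using rec[of j] by simp
      thus ?thesis using pos[of j] by (metis power2_le_imp_le less_imp_le)
    qed
    have le0: "\<theta> j \<le> \<theta> 0" for j
    proof (induction j)
      case (Suc j)
      then show ?case using dec[of j] by linarith
    qed simp
    have nn: "real nh \<ge> 2" using n2 by simp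
    have th0: "\<theta> 0 \<le> 1/2" unfolding t0 using nn by (intro divide_left_mono) auto
    have q: "1 - \<theta> 0 > 0" using th0 by simp
    have key: "(1 - \<theta> 0)^2 < 1 - \<theta> (Suc s)"
    proof -
      have "(1 - \<theta> 0)^2 = 1 - \<theta> 0 - \<theta> 0 * (1 - \<theta> 0)" by (simp add: power2_eq_square algebra_simps)
      also have "\<dots> < 1 - \<theta> 0" using q pos[of 0] by simp
      also have "\<dots> \<le> 1 - \<theta> (Suc s)" using le0[of "Suc s"] by simp
      finally show ?thesis .
    qed
    have "((1 - \<theta> 0) * \<theta> s)^2 < (\<theta> (Suc s))^2"
      using key rec[of s] pos[of s] by (simp add: power_mult_distrib)
    hence lt: "(1 - \<theta> 0) * \<theta> s < \<theta> (Suc s)"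
      using pos[of "Suc s"] by (simp add: power2_less_imp_less)
    have "c k t = (1 - \<theta> 0)^(k - t) / \<theta> s * (\<theta> (Suc s) / \<theta> s - (1 - \<theta> 0))"
    proof -
      have "k + 1 - t = Suc (k - t)" using t by auto
      thus ?thesis unfolding c_def s using pos[of s] by (simp add: field_simps power2_eq_square)
    qed
    moreover have "\<theta> (Suc s) / \<theta> s - (1 - \<theta> 0) > 0" using lt pos[of s] by (simp add: field_simps)
    ultimately show ?thesis using q pos[of s] by simp
  qed
  show ?thesis
  proof (intro conjI allI impI ballI)
    fix k
    show "u (Suc k) = (\<theta> k / \<theta> 0) *\<^sub>R z (Suc k) + \<theta> k *\<^sub>R (\<Sum>t = 1..k.
                 (\<theta> t * (1 - \<theta> 0)^(k - t) / (\<theta> (t - 1))^2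
                  - (1 - \<theta> 0)^(k + 1 - t) / \<theta> (t - 1)) *\<^sub>R u t)"
      using P1[of k] unfolding q0 S_def c_def .
  next
    fix k t :: nat assume "2 \<le> nh" "t \<in> {1..k}"
    thus "\<theta> t * (1 - \<theta> 0)^(k - t) / (\<theta> (t - 1))^2 - (1 - \<theta> 0)^(k + 1 - t) / \<theta> (t - 1) > 0"
      using P2 unfolding c_def by blast
  next
    fix k
    show "\<theta> k / \<theta> 0 + \<theta> k * (\<Sum>t = 1..k.
                 \<theta> t * (1 - \<theta> 0)^(k - t) / (\<theta> (t - 1))^2
                 - (1 - \<theta> 0)^(k + 1 - t) / \<theta> (t - 1)) = 1"
      using P3[of k] unfolding q0 c_def .
  qed
qed

end
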